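(* Let $\mathbb{T}_S$ be a spherically symmetric tree with origin $\mathcal{O}$, and consider the cone percolation process on $\mathbb{T}_S$ with radius of influence $R$ satisfying $\mathbb{P}(R=k)=\frac{Z_\alpha}{(k+1)^\alpha}$ for $k=1,2,\dots$, where $\alpha>1$ and $Z_\alpha>0$ are constants. If $\dim\inf\partial\mathbb{T}_S>0$, then $\mathbb{P}(V)>0$.
   Context: Cone percolation process: Let $\mathbb{T}$ be a tree with origin $\mathcal{O}$ and graph distance $d(\cdot,\cdot)$. Write $u\le v$ if $u$ lies on the path from $\mathcal{O}$ to $v$. Let $R$ be a random variable with values in $\{0,1,2,\dots\}$, $p_k=\mathbb{P}(R=k)$, and assume $p_0\in(0,1)$. Let $\{R_v\}$ be i.i.d. copies of $R$ indexed by the vertices. For each vertex $u$ let $B_u=\{v: u\le v,\ d(u,v)\le R_u\}$. Set $I_0=\{\mathcal{O}\}$, $I_{n+1}=\bigcup_{u\in I_n}B_u$, $I=\bigcup_n I_n$; survival is the event $V=\{|I|=\infty\}$. A tree is spherically symmetric if any two vertices at the same distance from $\mathcal{O}$ have the same degree. For a vertex $u$ and $n\ge1$, $M_n(u)=|\{v: u\le v,\ d(v,\mathcal{O})=d(u,\mathcal{O})+n\}|$, and $\dim\inf\partial\mathbb{T}:=\lim_{n\to\infty}\min_{v}\frac1n\ln M_n(v)$ (assumed to exist). *)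

theory Defs
  imports "HOL-Probability.Probability" "HOL-Library.Sublist"
begin

text \<open>Vertices are finite lists of child indices; the origin is the empty list.
  u \<le> v in the tree order is prefix u v; the graph distance between u and a
  descendant v is length v - length u.\<close>

text \<open>Spherically symmetric tree: every vertex at distance i from the origin has
  exactly c i children (so all vertices at the same level have the same degree).\<close>
definition ssym_tree :: "(nat \<Rightarrow> nat) \<Rightarrow> nat list set" where
  "ssym_tree c = {xs. \<forall>i<length xs. xs ! i < c i}"

definition M_desc :: "nat list set \<Rightarrow> nat \<Rightarrow> nat list \<Rightarrow> nat" where
  "M_desc T n u = card {v \<in> T. prefix u v \<and> length v = length u + n}"

text \<open>The sequence n \<mapsto> min_v (1/n) ln M_n(v); dim inf \<partial>T is its limit.\<close>
definition dim_inf_seq :: "nat list set \<Rightarrow> nat \<Rightarrow> real" where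
  "dim_inf_seq T n = (INF v\<in>T. ln (real (M_desc T n v)) / real n)"

definition cone :: "nat list set \<Rightarrow> nat list \<Rightarrow> nat \<Rightarrow> nat list set" where
  "cone T u r = {v \<in> T. prefix u v \<and> length v \<le> length u + r}"

primrec cp_gen :: "nat list set \<Rightarrow> (nat list \<Rightarrow> nat) \<Rightarrow> nat \<Rightarrow> nat list set" where
  "cp_gen T r 0 = {[]}"
| "cp_gen T r (Suc n) = (\<Union>u\<in>cp_gen T r n. cone T u (r u))"

definition cp_cluster :: "nat list set \<Rightarrow> (nat list \<Rightarrow> nat) \<Rightarrow> nat list set" where
  "cp_cluster T r = (\<Union>n. cp_gen T r n)"

end

theory Submission
  imports Defs "HOL-Real_Asymp.Real_Asymp"
begin



lemma card_bnd_lists: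
  "finite {ys::nat list. length ys = n \<and> (\<forall>i<n. ys!i < f i)} \<and>
   card {ys::nat list. length ys = n \<and> (\<forall>i<n. ys!i < f i)} = (\<Prod>i<n. f i)"
proof (induction n arbitrary: f)
  case 0
  have "{ys::nat list. length ys = 0 \<and> (\<forall>i<0. ys!i < f i)} = {[]}" by auto
  then show ?case by simp
next
  case (Suc n)
  let ?S = "{ys::nat list. length ys = n \<and> (\<forall>i<n. ys!i < f (Suc i))}"
  have eq: "{ys::nat list. length ys = Suc n \<and> (\<forall>i<Suc n. ys!i < f i)} =
      (\<lambda>(k,ys). k # ys) ` ({..<f 0} \<times> ?S)"
  proof (rule set_eqI, rule iffI)
    fix x assume x: "x \<in> {ys::nat list. length ys = Suc n \<and> (\<forall>i<Suc n. ys!i < f i)}"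
    then obtain k ys where kys: "x = k # ys" by (cases x) auto
    have "k < f 0" using x kys by auto
    moreover have "ys \<in> ?S" using x kys by fastforce
    ultimately show "x \<in> (\<lambda>(k,ys). k # ys) ` ({..<f 0} \<times> ?S)" using kys by force
  next
    fix x assume "x \<in> (\<lambda>(k,ys). k # ys) ` ({..<f 0} \<times> ?S)"
    then obtain k ys where "x = k # ys" "k < f 0" "ys \<in> ?S" by auto
    then show "x \<in> {ys::nat list. length ys = Suc n \<and> (\<forall>i<Suc n. ys!i < f i)}"
      by (auto simp: less_Suc_eq_0_disj)
  qed
  have inj: "inj_on (\<lambda>(k,ys). k # ys) ({..<f 0} \<times> ?S)" by (auto simp: inj_on_def)
  from Suc.IH[of "\<lambda>i. f (Suc i)"] have IH: "finite ?S" "card ?S = (\<Prod>i<n. f (Suc i))" by auto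
  show ?case unfolding eq using IH inj
    by (simp add: card_image card_cartesian_product prod.lessThan_Suc_shift del: prod.lessThan_Suc)
qed

lemma desc_set:
  assumes "u \<in> ssym_tree b"
  shows "{w \<in> ssym_tree b. prefix u w \<and> length w = length u + n} =
    (\<lambda>ys. u @ ys) ` {ys. length ys = n \<and> (\<forall>i<n. ys!i < b (length u + i))}"
proof (rule set_eqI, rule iffI)
  fix w assume w: "w \<in> {w \<in> ssym_tree b. prefix u w \<and> length w = length u + n}"
  then obtain zs where zs: "w = u @ zs" by (auto simp: prefix_def)
  have "length zs = n" using w zs by auto
  moreover have "\<forall>i<n. zs!i < b (length u + i)"
  proof (intro allI impI)
    fix i assume "i < n"
    then have "w ! (length u + i) < b (length u + i)" using w by (auto simp: ssym_tree_def)
    then show "zs!i < b (length u + i)" using zs by (simp add: nth_append)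
  qed
  ultimately show "w \<in> (\<lambda>ys. u @ ys) ` {ys. length ys = n \<and> (\<forall>i<n. ys!i < b (length u + i))}"
    using zs by auto
next
  fix w assume "w \<in> (\<lambda>ys. u @ ys) ` {ys. length ys = n \<and> (\<forall>i<n. ys!i < b (length u + i))}"
  then obtain ys where ys: "w = u @ ys" "length ys = n" "\<forall>i<n. ys!i < b (length u + i)" by auto
  have "\<forall>i<length w. w ! i < b i"
  proof (intro allI impI)
    fix i assume i: "i < length w"
    show "w ! i < b i"
    proof (cases "i < length u")
      case True then show ?thesis using assms ys(1) by (simp add: nth_append ssym_tree_def)
    next
      case False
      have "i - length u < n" using False ys i by auto
      then have "ys ! (i - length u) < b (length u + (i - length u))" using ys(3) by blast
      moreover have "length u + (i - length u) = i" using False by simp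
      ultimately show ?thesis using False ys(1) by (simp add: nth_append)
    qed
  qed
  then show "w \<in> {w \<in> ssym_tree b. prefix u w \<and> length w = length u + n}"
    using ys by (auto simp: ssym_tree_def)
qed

lemma desc_card:
  assumes "u \<in> ssym_tree b"
  shows "finite {w \<in> ssym_tree b. prefix u w \<and> length w = length u + n}"
    "card {w \<in> ssym_tree b. prefix u w \<and> length w = length u + n} = (\<Prod>i<n. b (length u + i))"
proof -
  have inj: "inj_on (\<lambda>ys. u @ ys) X" for X by (auto simp: inj_on_def)
  note C = card_bnd_lists[of n "\<lambda>i. b (length u + i)"]
  show "finite {w \<in> ssym_tree b. prefix u w \<and> length w = length u + n}"
    unfolding desc_set[OF assms] using C by auto
  show "card {w \<in> ssym_tree b. prefix u w \<and> length w = length u + n} = (\<Prod>i<n. b (length u + i))"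
    unfolding desc_set[OF assms] using C by (simp add: card_image[OF inj])
qed

lemma root_in: "[] \<in> ssym_tree b" by (simp add: ssym_tree_def)

lemma level_finite: "finite {w \<in> ssym_tree b. length w = n}"
  "card {w \<in> ssym_tree b. length w = n} = (\<Prod>i<n. b i)"
  using desc_card[OF root_in, of b n] by auto



lemma ln_nat_nonneg: "ln (real (k::nat)) \<ge> 0"
  by (cases "k = 0") auto

lemma dim_pos_M:
  assumes "dim_inf_seq T n > 0" "v \<in> T"
  shows "M_desc T n v \<ge> 2"
proof -
  let ?f = "\<lambda>v. ln (real (M_desc T n v)) / real n"
  have bdd: "bdd_below (?f ` T)"
    by (rule bdd_belowI[of _ 0]) (auto intro: divide_nonneg_nonneg ln_nat_nonneg)
  have "dim_inf_seq T n \<le> ?f v" unfolding dim_inf_seq_def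
    by (rule cINF_lower[OF bdd assms(2)])
  then have pos: "?f v > 0" using assms(1) by linarith
  then have "ln (real (M_desc T n v)) > 0"
    by (metis ln_nat_nonneg divide_le_0_iff not_le order_le_less)
  then have "real (M_desc T n v) > 1"
    by (metis less_numeral_extra(3) linorder_not_le ln_le_zero_iff of_nat_0_less_iff of_nat_less_0_iff ln_0 order_less_le)
  then show ?thesis by linarith
qed

lemma tree_facts:
  fixes c :: "nat \<Rightarrow> nat" and L :: real
  assumes lim: "dim_inf_seq (ssym_tree c) \<longlonglongrightarrow> L" and L: "L > 0"
  shows "\<forall>i. c i \<ge> 1" "\<exists>N0\<ge>1. \<forall>D. \<exists>i<N0. c (D+i) \<ge> 2"
proof -
  let ?T = "ssym_tree c"
  from order_tendstoD(1)[OF lim L] obtain N where N: "\<And>n. n \<ge> N \<Longrightarrow> dim_inf_seq ?T n > 0"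
    by (auto simp: eventually_sequentially)
  show c1: "\<forall>i. c i \<ge> 1"
  proof (rule ccontr)
    assume "\<not> (\<forall>i. c i \<ge> 1)"
    then obtain i where ci: "c i = 0" by (auto simp: not_le)
    let ?n = "max N (Suc i)"
    have "M_desc ?T ?n [] \<ge> 2" by (rule dim_pos_M[OF N root_in]) simp
    moreover have "M_desc ?T ?n [] = (\<Prod>k<?n. c k)"
      unfolding M_desc_def using desc_card(2)[OF root_in, of c ?n] by simp
    moreover have "(\<Prod>k<?n. c k) = 0" using ci
      by (metis finite_lessThan lessThan_iff max.cobounded2 Suc_le_eq prod_zero_iff)
    ultimately show False by simp
  qed
  define N0 where "N0 = max N 1"
  have "\<forall>D. \<exists>i<N0. c (D+i) \<ge> 2"
  proof
    fix D
    let ?u = "replicate D (0::nat)"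
    have u: "?u \<in> ?T" using c1 by (auto simp: ssym_tree_def Suc_le_eq)
    have "M_desc ?T N0 ?u \<ge> 2" by (rule dim_pos_M[OF N u]) (simp add: N0_def)
    moreover have "M_desc ?T N0 ?u = (\<Prod>k<N0. c (D+k))"
      unfolding M_desc_def using desc_card(2)[OF u, of N0] by simp
    ultimately have "(\<Prod>k<N0. c (D+k)) \<ge> 2" by simp
    show "\<exists>i<N0. c (D+i) \<ge> 2"
    proof (rule ccontr)
      assume "\<not> (\<exists>i<N0. c (D+i) \<ge> 2)"
      then have "\<forall>k<N0. c (D+k) = 1" using c1 by (metis One_nat_def Suc_1 le_antisym not_less_eq_eq)
      then have "(\<Prod>k<N0. c (D+k)) = 1" by (intro prod.neutral) auto
      with \<open>(\<Prod>k<N0. c (D+k)) \<ge> 2\<close> show False by simp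
    qed
  qed
  then show "\<exists>N0\<ge>1. \<forall>D. \<exists>i<N0. c (D+i) \<ge> 2" unfolding N0_def by (intro exI[of _ "max N 1"]) auto
qed



lemma prod_split_add: "(\<Prod>i<a+k. f i) = (\<Prod>i<a. f i) * (\<Prod>i<k. f (a+i))"
  for f :: "nat \<Rightarrow> 'b::comm_monoid_mult"
  by (induction k) (simp_all add: mult.assoc)

lemma prod_ge2:
  fixes b :: "nat \<Rightarrow> nat"
  assumes "\<forall>i. b i \<ge> 1" "i0 < N" "b i0 \<ge> 2"
  shows "(\<Prod>i<N. b i) \<ge> 2"
proof -
  have "(\<Prod>i<N. b i) = b i0 * (\<Prod>i\<in>{..<N} - {i0}. b i)"
    using assms(2) by (simp add: prod.remove)
  moreover have "(\<Prod>i\<in>{..<N} - {i0}. b i) \<ge> 1"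
    using assms(1) by (simp add: Suc_le_eq prod_pos)
  ultimately show ?thesis using assms(3)
    by (metis mult_le_mono nat_mult_1_right order_trans)
qed

lemma prod_window:
  fixes b :: "nat \<Rightarrow> nat"
  assumes b1: "\<forall>i. b i \<ge> 1" and w: "\<forall>D. \<exists>i<N0. b (D+i) \<ge> 2"
  shows "(\<Prod>i<N0*m. b (D+i)) \<ge> 2^m"
proof (induction m arbitrary: D)
  case 0 then show ?case by simp
next
  case (Suc m)
  have "(\<Prod>i<N0*Suc m. b (D+i)) = (\<Prod>i<N0. b (D+i)) * (\<Prod>i<N0*m. b ((D+N0)+i))"
    by (simp add: prod_split_add add.assoc)
  moreover have "(\<Prod>i<N0. b (D+i)) \<ge> 2"
  proof -
    obtain i0 where "i0 < N0" "b (D+i0) \<ge> 2" using w by blast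
    then show ?thesis using prod_ge2[of "\<lambda>i. b (D+i)" i0 N0] b1 by auto
  qed
  moreover have "(\<Prod>i<N0*m. b ((D+N0)+i)) \<ge> 2^m" by (rule Suc.IH)
  ultimately show ?case by (simp add: mult_le_mono)
qed

lemma prod_le_pow2:
  fixes b :: "nat \<Rightarrow> nat"
  assumes "\<forall>i. b i \<le> 2"
  shows "(\<Prod>i<n. b i) \<le> 2^n"
proof -
  have "(\<Prod>i<n. b i) \<le> (\<Prod>i<n. (2::nat))" by (rule prod_mono) (use assms in auto)
  then show ?thesis by simp
qed



lemma asymp_log:
  fixes a Z \<alpha> :: real assumes "a > 0" "Z > 0" "\<alpha> > 1"
  shows "eventually (\<lambda>x::real. a*x^2*ln 2 + (x+2)*ln 2 + \<alpha> * ln (a*x+1) - ln Z \<le> Z*2 powr x/(a*(x+1)+1) powr \<alpha>) at_top"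
  using assms by real_asymp

lemma asymp_key:
  fixes a Z \<alpha> :: real assumes a: "a > 0" and Z: "Z > 0" and al: "\<alpha> > 1"
  shows "\<exists>K. \<forall>x::nat\<ge>K. exp (a*real x^2*ln 2 - Z*2^x/(a*(real x+1)+1) powr \<alpha>) \<le> Z/(a*real x+1) powr \<alpha> / 2^(x+2)"
proof -
  have "eventually (\<lambda>x::nat. a*real x^2*ln 2 + (real x+2)*ln 2 + \<alpha> * ln (a*real x+1) - ln Z \<le> Z*2 powr real x/(a*(real x+1)+1) powr \<alpha>) sequentially"
    by (rule eventually_compose_filterlim[OF asymp_log[OF assms] filterlim_real_sequentially])
  then obtain K where K: "\<And>x. x \<ge> K \<Longrightarrow> a*real x^2*ln 2 + (real x+2)*ln 2 + \<alpha> * ln (a*real x+1) - ln Z \<le> Z*2 powr real x/(a*(real x+1)+1) powr \<alpha>"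
    by (auto simp: eventually_sequentially)
  show ?thesis
  proof (intro exI allI impI)
    fix x :: nat assume x: "x \<ge> K"
    have pos: "a*real x+1 > 0" using a by (simp add: add_nonneg_pos)
    have eq: "Z/(a*real x+1) powr \<alpha> / 2^(x+2) = exp (ln Z - \<alpha> * ln (a*real x+1) - (real x+2)*ln 2)"
    proof -
      have "exp (ln Z - \<alpha> * ln (a*real x+1) - (real x+2)*ln 2) = exp (ln Z) / exp (\<alpha> * ln (a*real x+1)) / exp ((real x+2)*ln 2)"
        by (simp add: exp_diff)
      also have "exp (\<alpha> * ln (a*real x+1)) = (a*real x+1) powr \<alpha>" using pos by (simp add: powr_def mult.commute)
      also have "exp ((real x+2)*ln 2) = 2^(x+2)"
      proof -
        have "exp ((real x+2)*ln 2) = 2 powr (real x + 2)" by (simp add: powr_def mult.commute)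
        also have "\<dots> = 2 powr (real (x+2))" by (simp add: add.commute)
        also have "\<dots> = 2^(x+2)" by (rule powr_realpow) simp
        finally show ?thesis .
      qed
      finally show ?thesis using Z by simp
    qed
    have "2 powr real x = (2::real)^x" by (rule powr_realpow) simp
    then have "a*real x^2*ln 2 - Z*2^x/(a*(real x+1)+1) powr \<alpha> \<le> ln Z - \<alpha> * ln (a*real x+1) - (real x+2)*ln 2"
      using K[OF x] by simp
    then show "exp (a*real x^2*ln 2 - Z*2^x/(a*(real x+1)+1) powr \<alpha>) \<le> Z/(a*real x+1) powr \<alpha> / 2^(x+2)"
      unfolding eq by simp
  qed
qed



lemma cp_gen_sub: "[] \<in> T \<Longrightarrow> cp_gen T r k \<subseteq> T"
  by (induction k) (auto simp: cone_def)

lemma (in prob_space) cp_meas: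
  assumes meas: "\<And>v. v \<in> T \<Longrightarrow> R v \<in> measurable M (count_space UNIV)" and root: "[] \<in> T"
  shows "{\<omega>\<in>space M. v \<in> cp_gen T (\<lambda>v. R v \<omega>) k} \<in> events"
proof (induction k arbitrary: v)
  case 0
  show ?case by (cases "v = []") auto
next
  case (Suc k)
  have eq: "{\<omega>\<in>space M. v \<in> cp_gen T (\<lambda>v. R v \<omega>) (Suc k)} =
    (\<Union>u\<in>T. {\<omega>\<in>space M. u \<in> cp_gen T (\<lambda>v. R v \<omega>) k} \<inter> (R u -` {r. v \<in> cone T u r} \<inter> space M))"
    using cp_gen_sub[OF root] by auto
  have ctb: "countable T" by (rule countable_subset[OF subset_UNIV]) simp
  show ?case unfolding eq
    by (rule sets.countable_UN''[OF ctb]) (intro sets.Int Suc.IH measurable_sets[OF meas], auto)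
qed

lemma finite_below: "finite {v \<in> ssym_tree c. length v < N}"
proof -
  have "{v \<in> ssym_tree c. length v < N} = (\<Union>n<N. {v \<in> ssym_tree c. length v = n})" by auto
  then show ?thesis using level_finite(1) by simp
qed

lemma inf_iff:
  assumes "X \<subseteq> ssym_tree c"
  shows "infinite X \<longleftrightarrow> (\<forall>N. \<exists>v\<in>X. N \<le> length v)"
proof
  assume inf: "infinite X"
  show "\<forall>N. \<exists>v\<in>X. N \<le> length v"
  proof (rule ccontr)
    assume "\<not> (\<forall>N. \<exists>v\<in>X. N \<le> length v)"
    then obtain N where "\<forall>v\<in>X. length v < N" by (auto simp: not_le)
    then have "X \<subseteq> {v \<in> ssym_tree c. length v < N}" using assms by auto
    then show False using inf finite_below finite_subset by blast
  qed
next
  assume H: "\<forall>N. \<exists>v\<in>X. N \<le> length v"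
  show "infinite X"
  proof
    assume "finite X"
    then have "finite (length ` X)" by simp
    then obtain B where "\<forall>v\<in>X. length v \<le> B" by (meson finite_nat_set_iff_bounded_le imageI)
    with H[rule_format, of "Suc B"] show False by fastforce
  qed
qed

lemma (in prob_space) S_meas:
  assumes meas: "\<And>v. v \<in> ssym_tree c \<Longrightarrow> R v \<in> measurable M (count_space UNIV)"
  shows "{\<omega> \<in> space M. infinite (cp_cluster (ssym_tree c) (\<lambda>v. R v \<omega>))} \<in> events"
proof -
  let ?T = "ssym_tree c"
  have sub: "cp_cluster ?T (\<lambda>v. R v \<omega>) \<subseteq> ?T" for \<omega>
    using cp_gen_sub[OF root_in] unfolding cp_cluster_def by blast
  have eq: "{\<omega> \<in> space M. infinite (cp_cluster ?T (\<lambda>v. R v \<omega>))} =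
     (\<Inter>N::nat. \<Union>v\<in>?T. \<Union>k::nat. {\<omega>\<in>space M. N \<le> length v \<and> v \<in> cp_gen ?T (\<lambda>v. R v \<omega>) k})"
    unfolding inf_iff[OF sub] using cp_gen_sub[OF root_in[of c]] by (auto simp: cp_cluster_def; blast)
  have ctb: "countable ?T" by (rule countable_subset[OF subset_UNIV]) simp
  have inner: "{\<omega>\<in>space M. N \<le> length v \<and> v \<in> cp_gen ?T (\<lambda>v. R v \<omega>) k} \<in> events" for N v k
  proof (cases "N \<le> length v")
    case True then show ?thesis using cp_meas[OF meas root_in, where v=v and k=k] by simp
  next
    case False then show ?thesis by simp
  qed
  have "(\<Union>v\<in>?T. \<Union>k::nat. {\<omega>\<in>space M. N \<le> length v \<and> v \<in> cp_gen ?T (\<lambda>v. R v \<omega>) k}) \<in> events" for N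
  proof (rule sets.countable_UN''[OF ctb])
    fix v show "(\<Union>k::nat. {\<omega>\<in>space M. N \<le> length v \<and> v \<in> cp_gen ?T (\<lambda>v. R v \<omega>) k}) \<in> events"
      by (rule sets.countable_UN) (simp add: image_subset_iff inner)
  qed
  then have "(\<Inter>N::nat. \<Union>v\<in>?T. \<Union>k::nat. {\<omega>\<in>space M. N \<le> length v \<and> v \<in> cp_gen ?T (\<lambda>v. R v \<omega>) k}) \<in> events"
    by (intro sets.countable_INT) blast+
  then show ?thesis by (subst eq)
qed



theorem corollary4:
  fixes c :: "nat \<Rightarrow> nat" and M :: "'a measure"
    and R :: "nat list \<Rightarrow> 'a \<Rightarrow> nat" and \<alpha> Z L :: real
  assumes "prob_space M"
    and "prob_space.indep_vars M (\<lambda>_. count_space UNIV) R (ssym_tree c)"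
    and "\<alpha> > 1" and "Z > 0"
    and "\<And>v k. v \<in> ssym_tree c \<Longrightarrow> k \<ge> 1 \<Longrightarrow>
           measure M {\<omega> \<in> space M. R v \<omega> = k} = Z / (real k + 1) powr \<alpha>"
    and "\<And>v. v \<in> ssym_tree c \<Longrightarrow> measure M {\<omega> \<in> space M. R v \<omega> = 0} > 0"
    and "\<And>v. v \<in> ssym_tree c \<Longrightarrow> measure M {\<omega> \<in> space M. R v \<omega> = 0} < 1"
    and "dim_inf_seq (ssym_tree c) \<longlonglongrightarrow> L"
    and "L > 0"
  shows "measure M {\<omega> \<in> space M. infinite (cp_cluster (ssym_tree c) (\<lambda>v. R v \<omega>))} > 0"
proof -
  interpret prob_space M by (rule assms(1))
  define T where "T = ssym_tree c"
  have c1: "\<forall>i. c i \<ge> 1" using tree_facts(1)[OF assms(8,9)] .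
  obtain N0 where N0: "N0 \<ge> 1" "\<forall>D. \<exists>i<N0. c (D+i) \<ge> 2" using tree_facts(2)[OF assms(8,9)] by blast
  define b where "b = (\<lambda>i. min (c i) (2::nat))"
  define T' where "T' = ssym_tree b"
  have b1: "\<forall>i. b i \<ge> 1" using c1 by (simp add: b_def)
  have b2: "\<forall>i. b i \<le> 2" by (simp add: b_def)
  have bw: "\<forall>D. \<exists>i<N0. b (D+i) \<ge> 2" using N0(2) by (simp add: b_def)
  have T'T: "T' \<subseteq> T" unfolding T'_def T_def ssym_tree_def b_def by auto
  from assms(2) have meas: "\<And>v. v \<in> T \<Longrightarrow> R v \<in> measurable M (count_space UNIV)"
    and IS: "indep_sets (\<lambda>i. sigma_sets (space M) {R i -` A \<inter> space M | A. A \<in> sets (count_space UNIV)}) T"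
    unfolding indep_vars_def T_def by auto
  define a where "a = real N0"
  have a: "a > 0" using N0 by (simp add: a_def)
  obtain K0 where K0: "\<And>x::nat. x \<ge> K0 \<Longrightarrow> exp (a*real x^2*ln 2 - Z*2^x/(a*(real x+1)+1) powr \<alpha>) \<le> Z/(a*real x+1) powr \<alpha> / 2^(x+2)"
    using asymp_key[OF a assms(4,3)] by blast
  define K where "K = max K0 1"
  define q where "q = (\<lambda>m::nat. Z / (real m + 1) powr \<alpha>)"
  define n where "n = (\<lambda>j. N0*(K+j))"
  define D where "D = (\<lambda>j. N0*(\<Sum>i<j. K+i))"
  have D0: "D 0 = 0" by (simp add: D_def)
  have DS: "D (Suc j) = D j + n j" for j by (simp add: D_def n_def algebra_simps)
  have n1: "n j \<ge> 1" for j using N0 by (simp add: n_def K_def)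
  have Dj: "j \<le> D j" for j
  proof -
    have "j = (\<Sum>i<j. (1::nat))" by simp
    also have "\<dots> \<le> (\<Sum>i<j. K+i)" by (rule sum_mono) (simp add: K_def)
    also have "\<dots> \<le> D j" unfolding D_def using N0 by simp
    finally show ?thesis .
  qed
  have Dsq: "D j \<le> N0*(K+j)^2" for j
  proof -
    have "(\<Sum>i<j. K+i) \<le> (\<Sum>i<j. K+j)" by (rule sum_mono) simp
    also have "\<dots> = j*(K+j)" by simp
    also have "\<dots> \<le> (K+j)^2" by (simp add: power2_eq_square)
    finally show ?thesis unfolding D_def by simp
  qed
  have root: "[] \<in> T" by (simp add: T_def root_in)
  have qprob: "m \<ge> 1 \<Longrightarrow> v \<in> T \<Longrightarrow> prob {\<omega> \<in> space M. R v \<omega> = m} = q m" for m v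
    using assms(5) by (simp add: q_def T_def)
  have qpos: "q m > 0" for m using assms(4) by (simp add: q_def)
  have qle1: "q m \<le> 1" if "m \<ge> 1" for m
  proof -
    have "q m = prob {\<omega> \<in> space M. R [] \<omega> = m}" using qprob[OF that root] by simp
    also have "\<dots> \<le> 1" by (rule prob_le_1)
    finally show ?thesis .
  qed
  have ev_eq: "{\<omega> \<in> space M. R v \<omega> = m} \<in> events" if "v \<in> T" for v m
  proof -
    have "{\<omega> \<in> space M. R v \<omega> = m} = R v -` {m} \<inter> space M" by auto
    then show ?thesis using measurable_sets[OF meas[OF that], of "{m}"] by simp
  qed
  define W where "W = (\<lambda>j u. {w \<in> T'. prefix u w \<and> length w = D (Suc j)})"
  define F where "F = (\<lambda>j u. {\<omega>\<in>space M. \<forall>w\<in>W j u. R w \<omega> < n (Suc j)})"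
  define Lev where "Lev = (\<lambda>j. {v \<in> T'. length v = D j})"
  define Bad where "Bad = (\<lambda>j. \<Union>u\<in>Lev j. F j u)"
  define A where "A = {\<omega>\<in>space M. R [] \<omega> = n 0}"
  have PF: "prob (F j u) \<le> exp (- (q (n (Suc j)) * 2^(K+j)))" and Fev: "F j u \<in> events"
    if u: "u \<in> Lev j" for j u
  proof -
    let ?m = "n (Suc j)"
    have uT': "u \<in> T'" and lu: "length u = D j" using u by (auto simp: Lev_def)
    have Weq: "W j u = {w \<in> T'. prefix u w \<and> length w = length u + n j}"
      unfolding W_def lu DS ..
    have Wfin: "finite (W j u)" unfolding Weq T'_def using desc_card(1)[OF uT'[unfolded T'_def]] .
    have Wcard: "card (W j u) = (\<Prod>i<n j. b (D j + i))"
      unfolding Weq T'_def using desc_card(2)[OF uT'[unfolded T'_def]] lu by simp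
    have Wbig: "card (W j u) \<ge> 2^(K+j)"
      unfolding Wcard n_def by (rule prod_window[OF b1 bw])
    have Wne: "W j u \<noteq> {}" using Wbig by (metis card.empty not_less zero_less_numeral zero_less_power)
    have WT: "W j u \<subseteq> T" using T'T by (auto simp: W_def)
    define E where "E = (\<lambda>w. R w -` {..<?m} \<inter> space M)"
    have Feq: "F j u = (\<Inter>w\<in>W j u. E w)" using Wne by (auto simp: F_def E_def)
    have Eev: "w \<in> W j u \<Longrightarrow> E w \<in> events" for w
      unfolding E_def using WT by (intro measurable_sets[OF meas]) auto
    show "F j u \<in> events" unfolding Feq using Wfin Wne Eev by (intro sets.finite_INT) auto
    have "prob (F j u) = (\<Prod>w\<in>W j u. prob (E w))"
      unfolding Feq
    proof (rule indep_setsD[OF IS WT Wne Wfin], intro ballI)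
      fix w assume "w \<in> W j u"
      show "E w \<in> sigma_sets (space M) {R w -` A \<inter> space M | A. A \<in> sets (count_space UNIV)}"
        unfolding E_def by (rule sigma_sets.Basic) auto
    qed
    also have "\<dots> \<le> (\<Prod>w\<in>W j u. 1 - q ?m)"
    proof (rule prod_mono, safe)
      fix w assume w: "w \<in> W j u"
      show "0 \<le> prob (E w)" by simp
      have "E w \<subseteq> space M - {\<omega> \<in> space M. R w \<omega> = ?m}" by (auto simp: E_def)
      then have "prob (E w) \<le> prob (space M - {\<omega> \<in> space M. R w \<omega> = ?m})"
        by (intro finite_measure_mono) (use ev_eq w WT in auto)
      also have "\<dots> = 1 - q ?m" using prob_compl[OF ev_eq] qprob[OF n1] w WT by auto
      finally show "prob (E w) \<le> 1 - q ?m" .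
    qed
    also have "\<dots> = (1 - q ?m) ^ card (W j u)" by simp
    also have "\<dots> \<le> (1 - q ?m) ^ (2^(K+j))"
      by (rule power_decreasing[OF Wbig]) (use qle1[OF n1] qpos[of "n (Suc j)"] in auto)
    also have "\<dots> \<le> exp (- q ?m) ^ (2^(K+j))"
      by (rule power_mono) (use qle1[OF n1] exp_ge_add_one_self[of "- q ?m"] in auto)
    also have "\<dots> = exp (- (q ?m * 2^(K+j)))"
      by (metis exp_of_nat_mult mult.commute mult_minus_left of_nat_numeral of_nat_power)
    finally show "prob (F j u) \<le> exp (- (q (n (Suc j)) * 2^(K+j)))" .
  qed
  have Levfin: "finite (Lev j)" for j unfolding Lev_def T'_def by (rule level_finite(1))
  have Levcard: "card (Lev j) \<le> 2^(D j)" for j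
    unfolding Lev_def T'_def level_finite(2) by (rule prod_le_pow2[OF b2])
  have Badev: "Bad j \<in> events" for j
    unfolding Bad_def using Levfin Fev by (intro sets.finite_UN) auto
  define q0 where "q0 = q (n 0)"
  define g where "g = (\<lambda>j::nat. q0/4 * (1/2)^j)"
  have PBad: "prob (Bad j) \<le> g j" for j
  proof -
    define x where "x = K + j"
    have xK: "x \<ge> K0" by (simp add: x_def K_def)
    have "prob (Bad j) \<le> (\<Sum>u\<in>Lev j. prob (F j u))"
      unfolding Bad_def using Levfin Fev by (intro finite_measure_subadditive_finite) auto
    also have "\<dots> \<le> (\<Sum>u\<in>Lev j. exp (- (q (n (Suc j)) * 2^(K+j))))"
      by (rule sum_mono) (rule PF)
    also have "\<dots> = real (card (Lev j)) * exp (- (q (n (Suc j)) * 2^(K+j)))" by simp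
    also have "\<dots> \<le> 2^(D j) * exp (- (q (n (Suc j)) * 2^(K+j)))"
    proof -
      have "real (card (Lev j)) \<le> 2^(D j)" using Levcard[of j]
        by (metis of_nat_le_iff of_nat_numeral of_nat_power)
      then show ?thesis by (rule mult_right_mono) simp
    qed
    also have "\<dots> \<le> exp (a*real x^2*ln 2) * exp (- (q (n (Suc j)) * 2^(K+j)))"
    proof -
      have "(2::real)^(D j) \<le> 2^(N0*x^2)" using Dsq[of j] by (simp add: x_def)
      also have "(2::real)^(N0*x^2) = exp (a*real x^2*ln 2)"
      proof -
        have "(2::real) powr (real (N0*x^2)) = 2^(N0*x^2)" by (rule powr_realpow) simp
        then have "(2::real)^(N0*x^2) = 2 powr (real (N0*x^2))" by simp
        also have "\<dots> = exp (a*real x^2*ln 2)" by (simp add: powr_def a_def mult_ac)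
        finally show ?thesis .
      qed
      finally show ?thesis by (rule mult_right_mono) simp
    qed
    also have "\<dots> = exp (a*real x^2*ln 2 - Z*2^x/(a*(real x+1)+1) powr \<alpha>)"
    proof -
      have "q (n (Suc j)) * 2^(K+j) = Z*2^x/(a*(real x+1)+1) powr \<alpha>"
        by (simp add: q_def n_def x_def a_def algebra_simps)
      then show ?thesis by (simp add: exp_add[symmetric])
    qed
    also have "\<dots> \<le> Z/(a*real x+1) powr \<alpha> / 2^(x+2)" by (rule K0[OF xK])
    also have "\<dots> = q (n j) / 2^(x+2)" by (simp add: q_def n_def x_def a_def)
    also have "\<dots> \<le> q0 / 2^(j+2)"
    proof (rule frac_le)
      show "0 \<le> q0" using qpos by (simp add: q0_def less_imp_le)
      have "(real (n 0) + 1) powr \<alpha> \<le> (real (n j) + 1) powr \<alpha>"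
        by (rule powr_mono2) (use assms(3) in \<open>auto simp: n_def intro: mult_left_mono\<close>)
      then show "q (n j) \<le> q0" unfolding q0_def q_def
        by (rule divide_left_mono) (use assms(4) in auto)
      show "0 < (2::real)^(j+2)" by simp
      show "(2::real)^(j+2) \<le> 2^(x+2)" by (rule power_increasing) (auto simp: x_def)
    qed
    also have "\<dots> = g j" by (simp add: g_def power_add field_simps)
    finally show ?thesis .
  qed
  have q0pos: "q0 > 0" by (simp add: q0_def qpos)
  have gsum: "g sums (q0/2)"
  proof -
    have "(\<lambda>j. (1/2::real)^j) sums 2" using geometric_sums[of "1/2::real"] by simp
    from sums_mult[OF this, of "q0/4"] show ?thesis by (simp add: g_def)
  qed
  have summ: "summable (\<lambda>j. prob (Bad j))"
    by (rule summable_comparison_test'[OF sums_summable[OF gsum], of 0]) (use PBad in auto)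
  have "prob (\<Union>j. Bad j) \<le> (\<Sum>j. prob (Bad j))"
    by (rule finite_measure_subadditive_countably) (use Badev summ in auto)
  also have "\<dots> \<le> (\<Sum>j. g j)"
    by (rule suminf_le) (use PBad summ sums_summable[OF gsum] in auto)
  also have "\<dots> = q0/2" using gsum by (simp add: sums_iff)
  finally have PU: "prob (\<Union>j. Bad j) \<le> q0/2" .
  have Aev: "A \<in> events" unfolding A_def by (rule ev_eq[OF root])
  have PA: "prob A = q0" unfolding A_def q0_def by (rule qprob[OF n1 root])
  have Uev: "(\<Union>j. Bad j) \<in> events" using Badev by auto
  define E where "E = A - (\<Union>j. Bad j)"
  have "prob E = prob A - prob (A \<inter> (\<Union>j. Bad j))"
    unfolding E_def by (rule finite_measure_Diff'[OF Aev Uev])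
  moreover have "prob (A \<inter> (\<Union>j. Bad j)) \<le> prob (\<Union>j. Bad j)"
    by (rule finite_measure_mono) (use Uev in auto)
  ultimately have PE: "prob E > 0" using PU PA q0pos by linarith
  have ES: "E \<subseteq> {\<omega> \<in> space M. infinite (cp_cluster (ssym_tree c) (\<lambda>v. R v \<omega>))}"
  proof
    fix \<omega> assume \<omega>: "\<omega> \<in> E"
    let ?r = "\<lambda>v. R v \<omega>"
    have sp: "\<omega> \<in> space M" and r0: "R [] \<omega> = n 0" using \<omega> by (auto simp: E_def A_def)
    have good: "\<And>j u. u \<in> Lev j \<Longrightarrow> \<exists>w\<in>W j u. R w \<omega> \<ge> n (Suc j)"
      using \<omega> sp by (auto simp: E_def Bad_def F_def not_less)
    have chain: "\<exists>w. w \<in> T' \<and> length w = D (Suc j) \<and> R w \<omega> \<ge> n (Suc j) \<and> w \<in> cp_gen T ?r (Suc j)" for j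
    proof (induction j)
      case 0
      have "[] \<in> Lev 0" by (simp add: Lev_def D0 T'_def root_in)
      from good[OF this] obtain w where w: "w \<in> W 0 []" "R w \<omega> \<ge> n (Suc 0)" by blast
      have "w \<in> cone T [] (R [] \<omega>)" using w(1) T'T r0 by (auto simp: W_def cone_def DS D0)
      then have "w \<in> cp_gen T ?r (Suc 0)" by simp
      then show ?case using w by (auto simp: W_def)
    next
      case (Suc j)
      then obtain w where w: "w \<in> T'" "length w = D (Suc j)" "R w \<omega> \<ge> n (Suc j)" "w \<in> cp_gen T ?r (Suc j)"
        by blast
      have "w \<in> Lev (Suc j)" using w by (simp add: Lev_def)
      from good[OF this] obtain w' where w': "w' \<in> W (Suc j) w" "R w' \<omega> \<ge> n (Suc (Suc j))" by blast
      have "w' \<in> cone T w (R w \<omega>)" using w' w T'T by (auto simp: W_def cone_def DS)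
      then have "w' \<in> cp_gen T ?r (Suc (Suc j))" using w(4) by auto
      then show ?case using w' by (auto simp: W_def)
    qed
    have "infinite (cp_cluster T ?r)"
    proof
      assume fin: "finite (cp_cluster T ?r)"
      then have "finite (length ` cp_cluster T ?r)" by simp
      then obtain B where "\<forall>k\<in>length ` cp_cluster T ?r. k \<le> B"
        using finite_nat_set_iff_bounded_le by blast
      then have B: "\<forall>v\<in>cp_cluster T ?r. length v \<le> B" by auto
      obtain w where "length w = D (Suc B)" "w \<in> cp_gen T ?r (Suc B)" using chain by blast
      moreover have "Suc B \<le> D (Suc B)" by (rule Dj)
      moreover have "w \<in> cp_cluster T ?r" using calculation(2) unfolding cp_cluster_def by blast
      ultimately show False using B by force
    qed
    then show "\<omega> \<in> {\<omega> \<in> space M. infinite (cp_cluster (ssym_tree c) (\<lambda>v. R v \<omega>))}"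
      using sp by (simp add: T_def)
  qed
  have Sev: "{\<omega> \<in> space M. infinite (cp_cluster (ssym_tree c) (\<lambda>v. R v \<omega>))} \<in> events"
    by (rule S_meas) (use meas in \<open>auto simp: T_def\<close>)
  have "prob E \<le> prob {\<omega> \<in> space M. infinite (cp_cluster (ssym_tree c) (\<lambda>v. R v \<omega>))}"
    by (rule finite_measure_mono[OF ES Sev])
  with PE show ?thesis by simp
qed


end
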